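(* Let $\Theta(t,\vartheta,\omega)$ be the characteristics of a solution of the kinetic Kuramoto model for non-identical oscillators with coupling $K>0$ and initial datum $f_0$. Then $$\frac{d}{dt}\int_{\mathcal T\times\mathbb R}\ln\!\left(\frac{\partial\Theta}{\partial\vartheta}(t,\vartheta,\omega)\right)f_0(\vartheta,\omega)\,d\vartheta\,d\omega=-K R(t)^2.$$
   Context: Kinetic Kuramoto model for non-identical oscillators: characteristics $\dot\Theta(t,\vartheta,\omega)=\omega-KR(t)\sin(\Theta(t,\vartheta,\omega)-\varphi(t))$, $\Theta(0,\vartheta,\omega)=\vartheta$, with $R(t)e^{\mathrm{i}\varphi(t)}=\int e^{\mathrm{i}\vartheta}f(t,\vartheta,\omega)d\vartheta d\omega$, where $f(t)$ is the push-forward of the probability measure $f_0$ on $\mathcal T\times\mathbb R$ ($\mathcal T=\mathbb R/2\pi\mathbb Z$) by $(\vartheta,\omega)\mapsto(\Theta(t,\vartheta,\omega),\omega)$. *)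

theory Defs
  imports "HOL-Probability.Probability"
begin

definition dTheta_dvartheta :: "(real \<Rightarrow> real \<Rightarrow> real \<Rightarrow> real) \<Rightarrow> real \<Rightarrow> real \<Rightarrow> real \<Rightarrow> real" where
  "dTheta_dvartheta \<Theta> t \<theta> \<omega> = deriv (\<lambda>y. \<Theta> t y \<omega>) \<theta>"

end

theory Submission
  imports Defs
begin

lemma pos_lin_ode:
  fixes f \<alpha> :: "real \<Rightarrow> real" and K :: real
  assumes f0: "f 0 = 1" and d: "\<And>t. (f has_real_derivative \<alpha> t * f t) (at t)"
    and b: "\<And>t. \<bar>\<alpha> t\<bar> \<le> K"
  shows "f t > 0"
proof -
  have nz: "f s \<noteq> 0" for s
  proof (cases "s \<ge> 0")
    case True
    let ?g = "\<lambda>s. (f s)^2 * exp (2*K * s)"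
    have "?g 0 \<le> ?g s"
    proof (rule DERIV_nonneg_imp_nondecreasing[of 0 s ?g, OF True])
      fix x
      have "(?g has_real_derivative (2 * f x * (\<alpha> x * f x)) * exp (2*K * x) + (f x)^2 * (exp (2*K * x) * (2*K))) (at x)"
        by (auto intro!: derivative_eq_intros d)
      moreover have "(2 * f x * (\<alpha> x * f x)) * exp (2*K * x) + (f x)^2 * (exp (2*K * x) * (2*K)) = 2 * (\<alpha> x + K) * (f x)^2 * exp (2*K * x)"
        by (simp add: algebra_simps power2_eq_square)
      moreover have "2 * (\<alpha> x + K) * (f x)^2 * exp (2*K * x) \<ge> 0"
        using b[of x] by (intro mult_nonneg_nonneg) auto
      ultimately show "\<exists>y. (?g has_real_derivative y) (at x) \<and> 0 \<le> y" by metis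
    qed
    then show ?thesis using f0 by auto
  next
    case False
    let ?g = "\<lambda>s. - ((f s)^2 * exp (-(2*K * s)))"
    have "?g s \<le> ?g 0"
    proof (rule DERIV_nonneg_imp_nondecreasing[of s 0 ?g])
      show "s \<le> 0" using False by simp
      fix x
      have "(?g has_real_derivative - ((2 * f x * (\<alpha> x * f x)) * exp (-(2*K * x)) + (f x)^2 * (exp (-(2*K * x)) * (-(2*K))))) (at x)"
        by (auto intro!: derivative_eq_intros d)
      moreover have "- ((2 * f x * (\<alpha> x * f x)) * exp (-(2*K * x)) + (f x)^2 * (exp (-(2*K * x)) * (-(2*K)))) = 2 * (K - \<alpha> x) * (f x)^2 * exp (-(2*K * x))"
        by (simp add: algebra_simps power2_eq_square)
      moreover have "2 * (K - \<alpha> x) * (f x)^2 * exp (-(2*K * x)) \<ge> 0"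
        using b[of x] by (intro mult_nonneg_nonneg) auto
      ultimately show "\<exists>y. (?g has_real_derivative y) (at x) \<and> 0 \<le> y" by metis
    qed
    then show ?thesis using f0 by auto
  qed
  have ct: "isCont f x" for x using d[of x] by (rule DERIV_isCont)
  show ?thesis
  proof (rule ccontr)
    assume "\<not> f t > 0"
    then have ft: "f t \<le> 0" by simp
    show False
    proof (cases "t \<ge> 0")
      case True
      from IVT2[of f t 0 0] ft f0 True ct obtain x where "f x = 0" by auto
      then show False using nz by auto
    next
      case False
      from IVT[of f t 0 0] ft f0 False ct obtain x where "f x = 0" by auto
      then show False using nz by auto
    qed
  qed
qed


lemma dq_seq:
  fixes f :: "real \<Rightarrow> real"
  assumes "(f has_real_derivative D) (at a)"
  shows "(\<lambda>n. (f (a + 1 / real (Suc n)) - f a) / (1 / real (Suc n))) \<longlonglongrightarrow> D"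
proof -
  have "((\<lambda>y. (f y - f a) / (y - a)) \<longlongrightarrow> D) (at a)"
    using assms by (simp add: has_field_derivative_iff)
  then have *: "\<forall>X. (\<forall>i. X i \<in> UNIV - {a}) \<longrightarrow> X \<longlonglongrightarrow> a \<longrightarrow> ((\<lambda>y. (f y - f a) / (y - a)) \<circ> X) \<longlonglongrightarrow> D"
    by (simp add: tendsto_at_iff_sequentially)
  have l: "(\<lambda>n. a + 1 / real (Suc n)) \<longlonglongrightarrow> a"
    using tendsto_add[OF tendsto_const[of a] LIMSEQ_Suc[OF lim_inverse_n']] by (simp add: inverse_eq_divide)
  have "((\<lambda>y. (f y - f a) / (y - a)) \<circ> (\<lambda>n. a + 1 / real (Suc n))) \<longlonglongrightarrow> D"
    using *[rule_format, OF _ l] by simp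
  then show ?thesis by (simp add: comp_def)
qed

lemma var_eq:
  fixes Th :: "real \<Rightarrow> real \<Rightarrow> real" and R \<phi> :: "real \<Rightarrow> real" and K \<omega> \<theta> t :: real
  assumes K: "K > 0"
    and cont: "continuous_on UNIV (\<lambda>p. Th (fst p) (snd p))"
    and diff: "\<And>t y. Th t differentiable (at y)"
    and contd: "continuous_on UNIV (\<lambda>p. deriv (Th (fst p)) (snd p))"
    and ode: "\<And>t y. ((\<lambda>s. Th s y) has_real_derivative (\<omega> - K * R t * sin (Th t y - \<phi> t))) (at t)"
    and R0: "\<And>t. 0 \<le> R t" and R1: "\<And>t. R t \<le> 1"
  shows "((\<lambda>s. deriv (Th s) \<theta>) has_real_derivative (- K * R t * cos (Th t \<theta> - \<phi> t) * deriv (Th t) \<theta>)) (at t)"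
proof -
  define h where "h n = 1 / real (Suc n)" for n
  have hpos: "h n > 0" for n by (simp add: h_def)
  have hle: "h n \<le> 1" for n by (simp add: h_def)
  define F where "F n x = (Th x (\<theta> + h n) - Th x \<theta>) / h n" for n x
  define F' where "F' n x = (- K * R x * (sin (Th x (\<theta> + h n) - \<phi> x) - sin (Th x \<theta> - \<phi> x))) / h n" for n x
  define G' where "G' x = - K * R x * cos (Th x \<theta> - \<phi> x) * deriv (Th x) \<theta>" for x
  define S where "S = ball t (1::real)"
  have Dy: "(Th x has_real_derivative deriv (Th x) y) (at y)" for x y
    using diff DERIV_deriv_iff_real_differentiable by blast
  have derF: "((F n) has_derivative (\<lambda>d. F' n x * d)) (at x within S)" for n x
  proof -
    have "((F n) has_real_derivative
      ((\<omega> - K * R x * sin (Th x (\<theta> + h n) - \<phi> x)) - (\<omega> - K * R x * sin (Th x \<theta> - \<phi> x))) / h n) (at x)"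
      unfolding F_def by (intro DERIV_cdivide DERIV_diff ode)
    moreover have "((\<omega> - K * R x * sin (Th x (\<theta> + h n) - \<phi> x)) - (\<omega> - K * R x * sin (Th x \<theta> - \<phi> x))) / h n = F' n x"
      unfolding F'_def by (simp add: algebra_simps)
    ultimately have "((F n) has_real_derivative F' n x) (at x within S)"
      by (simp add: has_field_derivative_at_within)
    then show ?thesis by (simp add: has_field_derivative_def)
  qed
  define C where "C = cball t (1::real) \<times> cball \<theta> (1::real)"
  have cC: "compact C" unfolding C_def by (intro compact_Times compact_cball)
  have cP1: "continuous_on C (\<lambda>p. cos (Th (fst p) (snd p)) * deriv (Th (fst p)) (snd p))"
    by (intro continuous_on_mult continuous_on_cos continuous_on_subset[OF cont] continuous_on_subset[OF contd]) auto
  have cP2: "continuous_on C (\<lambda>p. sin (Th (fst p) (snd p)) * deriv (Th (fst p)) (snd p))"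
    by (intro continuous_on_mult continuous_on_sin continuous_on_subset[OF cont] continuous_on_subset[OF contd]) auto
  have nle: "\<forall>\<^sub>F n in sequentially. \<forall>x\<in>S. \<forall>d. norm (F' n x * d - G' x * d) \<le> e * norm d" if e: "e > 0" for e
  proof -
    have e2: "e / (2*K) > 0" using e K by simp
    have "\<exists>d>0. \<forall>p\<in>C. \<forall>p'\<in>C. dist p' p < d \<longrightarrow>
        dist ((\<lambda>p. cos (Th (fst p) (snd p)) * deriv (Th (fst p)) (snd p)) p') ((\<lambda>p. cos (Th (fst p) (snd p)) * deriv (Th (fst p)) (snd p)) p) < e / (2*K)"
      using compact_uniformly_continuous[OF cP1 cC] e2 unfolding uniformly_continuous_on_def by blast
    then obtain d1 where d1: "d1 > 0" "\<And>p p'. p \<in> C \<Longrightarrow> p' \<in> C \<Longrightarrow> dist p' p < d1 \<Longrightarrow>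
        dist (cos (Th (fst p') (snd p')) * deriv (Th (fst p')) (snd p')) (cos (Th (fst p) (snd p)) * deriv (Th (fst p)) (snd p)) < e / (2*K)"
      by auto
    have "\<exists>d>0. \<forall>p\<in>C. \<forall>p'\<in>C. dist p' p < d \<longrightarrow>
        dist ((\<lambda>p. sin (Th (fst p) (snd p)) * deriv (Th (fst p)) (snd p)) p') ((\<lambda>p. sin (Th (fst p) (snd p)) * deriv (Th (fst p)) (snd p)) p) < e / (2*K)"
      using compact_uniformly_continuous[OF cP2 cC] e2 unfolding uniformly_continuous_on_def by blast
    then obtain d2 where d2: "d2 > 0" "\<And>p p'. p \<in> C \<Longrightarrow> p' \<in> C \<Longrightarrow> dist p' p < d2 \<Longrightarrow>
        dist (sin (Th (fst p') (snd p')) * deriv (Th (fst p')) (snd p')) (sin (Th (fst p) (snd p)) * deriv (Th (fst p)) (snd p)) < e / (2*K)"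
      by auto
    obtain N where N: "inverse (real (Suc N)) < min d1 d2"
      using reals_Archimedean[of "min d1 d2"] d1 d2 by auto
    show ?thesis unfolding eventually_sequentially
    proof (intro exI allI impI ballI)
      fix n x d assume n: "N \<le> n" and x: "x \<in> S"
      have hn: "h n < min d1 d2"
      proof -
        have "h n \<le> inverse (real (Suc N))" unfolding h_def using n
          by (simp add: inverse_eq_divide frac_le)
        then show ?thesis using N by linarith
      qed
      have der: "((\<lambda>y. sin (Th x y - \<phi> x)) has_real_derivative cos (Th x y - \<phi> x) * deriv (Th x) y) (at y)" for y
        by (auto intro!: derivative_eq_intros Dy)
      obtain \<xi> where xi: "\<theta> < \<xi>" "\<xi> < \<theta> + h n"
        "sin (Th x (\<theta> + h n) - \<phi> x) - sin (Th x \<theta> - \<phi> x) = (\<theta> + h n - \<theta>) * (cos (Th x \<xi> - \<phi> x) * deriv (Th x) \<xi>)"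
        using MVT2[of \<theta> "\<theta> + h n" "\<lambda>y. sin (Th x y - \<phi> x)" "\<lambda>y. cos (Th x y - \<phi> x) * deriv (Th x) y"] der hpos[of n]
        by auto
      have F'eq: "F' n x = - K * R x * (cos (Th x \<xi> - \<phi> x) * deriv (Th x) \<xi>)"
        unfolding F'_def xi(3) using hpos[of n] by simp
      have pC: "(x, \<theta>) \<in> C" "(x, \<xi>) \<in> C" using x xi hle[of n] unfolding C_def S_def
        by (auto simp: dist_real_def)
      have dd: "dist (x, \<xi>) (x, \<theta>) < h n" using xi by (simp add: dist_Pair_Pair dist_real_def)
      define a1 where "a1 = cos (Th x \<xi>) * deriv (Th x) \<xi> - cos (Th x \<theta>) * deriv (Th x) \<theta>"
      define a2 where "a2 = sin (Th x \<xi>) * deriv (Th x) \<xi> - sin (Th x \<theta>) * deriv (Th x) \<theta>"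
      have a1: "\<bar>a1\<bar> < e / (2*K)" using d1(2)[OF pC(1) pC(2)] dd hn unfolding a1_def by (simp add: dist_real_def)
      have a2: "\<bar>a2\<bar> < e / (2*K)" using d2(2)[OF pC(1) pC(2)] dd hn unfolding a2_def by (simp add: dist_real_def)
      have diffeq: "F' n x - G' x = - K * R x * (cos (\<phi> x) * a1 + sin (\<phi> x) * a2)"
        unfolding F'eq G'_def a1_def a2_def cos_diff by (simp add: algebra_simps)
      have "\<bar>cos (\<phi> x) * a1 + sin (\<phi> x) * a2\<bar> \<le> \<bar>a1\<bar> + \<bar>a2\<bar>"
      proof -
        have "\<bar>cos (\<phi> x) * a1\<bar> \<le> \<bar>a1\<bar>" using abs_cos_le_one[of "\<phi> x"]
          by (simp add: abs_mult mult_left_le_one_le)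
        moreover have "\<bar>sin (\<phi> x) * a2\<bar> \<le> \<bar>a2\<bar>" using abs_sin_le_one[of "\<phi> x"]
          by (simp add: abs_mult mult_left_le_one_le)
        ultimately show ?thesis by linarith
      qed
      also have "\<dots> \<le> e / K" using a1 a2 by simp
      finally have b1: "\<bar>cos (\<phi> x) * a1 + sin (\<phi> x) * a2\<bar> \<le> e / K" .
      have "\<bar>F' n x - G' x\<bar> = K * R x * \<bar>cos (\<phi> x) * a1 + sin (\<phi> x) * a2\<bar>"
        unfolding diffeq using K R0[of x] by (simp add: abs_mult)
      also have "\<dots> \<le> K * 1 * (e / K)"
      proof -
        have "R x * \<bar>cos (\<phi> x) * a1 + sin (\<phi> x) * a2\<bar> \<le> 1 * (e / K)"
          by (rule mult_mono) (use R1[of x] b1 in auto)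
        then have "K * (R x * \<bar>cos (\<phi> x) * a1 + sin (\<phi> x) * a2\<bar>) \<le> K * (1 * (e / K))"
          by (rule mult_left_mono) (use K in auto)
        then show ?thesis by (simp only: mult.assoc)
      qed
      finally have "\<bar>F' n x - G' x\<bar> \<le> e" using K by simp
      then have "\<bar>F' n x - G' x\<bar> * \<bar>d\<bar> \<le> e * \<bar>d\<bar>"
        by (rule mult_right_mono) simp
      moreover have "norm (F' n x * d - G' x * d) = \<bar>F' n x - G' x\<bar> * \<bar>d\<bar>"
        by (simp only: left_diff_distrib[symmetric] abs_mult real_norm_def)
      ultimately show "norm (F' n x * d - G' x * d) \<le> e * norm d" by simp
    qed
  qed
  have tS: "t \<in> S" unfolding S_def by simp
  have lim: "(\<lambda>n. F n x) \<longlonglongrightarrow> deriv (Th x) \<theta>" for x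
    using dq_seq[OF Dy[of x \<theta>]] unfolding F_def h_def .
  have cS: "convex S" by (simp add: S_def)
  have "\<exists>g. \<forall>x\<in>S. (\<lambda>n. F n x) \<longlonglongrightarrow> g x \<and> (g has_derivative (\<lambda>d. G' x * d)) (at x within S)"
    by (rule has_derivative_sequence[of S F "\<lambda>n x d. F' n x * d" "\<lambda>x d. G' x * d" t])
       (rule cS, rule derF, erule nle, rule tS, rule lim)
  then obtain g where g: "\<forall>x\<in>S. (\<lambda>n. F n x) \<longlonglongrightarrow> g x \<and> (g has_derivative (\<lambda>d. G' x * d)) (at x within S)"
    by blast
  have geq: "g x = deriv (Th x) \<theta>" if "x \<in> S" for x
    using LIMSEQ_unique[OF conjunct1[OF g[rule_format, OF that]] lim] .
  have "(g has_derivative (\<lambda>d. G' t * d)) (at t within S)" using g tS by blast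
  moreover have "at t within S = at t" using at_within_open[of t S] tS by (simp add: S_def)
  ultimately have "(g has_real_derivative G' t) (at t)"
    by (simp add: has_field_derivative_def)
  then have "((\<lambda>s. deriv (Th s) \<theta>) has_real_derivative G' t) (at t)"
    by (rule has_field_derivative_transform_within_open[where S=S]) (auto simp: S_def geq)
  then show ?thesis unfolding G'_def .
qed

lemma lip_bound:
  fixes f f' :: "real \<Rightarrow> real"
  assumes d: "\<And>x. (f has_real_derivative f' x) (at x)" and b: "\<And>x. \<bar>f' x\<bar> \<le> B"
  shows "\<bar>f a - f b\<bar> \<le> B * \<bar>a - b\<bar>"
proof -
  have *: "\<bar>f v - f u\<bar> \<le> B * (v - u)" if "u < v" for u v
  proof -
    have "\<exists>z>u. z < v \<and> f v - f u = (v - u) * f' z"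
      by (rule MVT2[OF that]) (rule d)
    then obtain z where "f v - f u = (v - u) * f' z" by blast
    then have "\<bar>f v - f u\<bar> = (v - u) * \<bar>f' z\<bar>" using that by (simp add: abs_mult)
    also have "\<dots> \<le> (v - u) * B" using that b[of z] by (intro mult_left_mono) auto
    finally show ?thesis by (simp add: mult.commute)
  qed
  consider "a < b" | "a = b" | "b < a" by linarith
  then show ?thesis
  proof cases
    case 1 then show ?thesis using *[of a b] by (simp add: abs_minus_commute)
  next
    case 2 then show ?thesis by simp
  next
    case 3 then show ?thesis using *[of b a] by simp
  qed
qed

theorem mainTheorem9:
  fixes K :: real
    and f0 :: "(real \<times> real) measure"
    and \<Theta> :: "real \<Rightarrow> real \<Rightarrow> real \<Rightarrow> real"
    and R \<phi> :: "real \<Rightarrow> real"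
  assumes K_pos: "K > 0"
    and prob: "prob_space f0"
    and sets_f0: "sets f0 = sets borel"
    and cont: "continuous_on UNIV (\<lambda>(t, \<theta>, \<omega>). \<Theta> t \<theta> \<omega>)"
    and diff_theta: "\<And>t \<theta> \<omega>. (\<lambda>y. \<Theta> t y \<omega>) differentiable (at \<theta>)"
    and cont_dtheta: "\<And>\<omega>. continuous_on UNIV (\<lambda>(t, \<theta>). dTheta_dvartheta \<Theta> t \<theta> \<omega>)"
    and init: "\<And>\<theta> \<omega>. \<Theta> 0 \<theta> \<omega> = \<theta>"
    and ode: "\<And>t \<theta> \<omega>. ((\<lambda>s. \<Theta> s \<theta> \<omega>) has_real_derivative
                 (\<omega> - K * R t * sin (\<Theta> t \<theta> \<omega> - \<phi> t))) (at t)"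
    and R_nonneg: "\<And>t. R t \<ge> 0"
    and order_param: "\<And>t. complex_of_real (R t) * cis (\<phi> t)
                             = (LINT x|f0. cis (\<Theta> t (fst x) (snd x)))"
  shows "\<And>t. ((\<lambda>s. LINT x|f0. ln (dTheta_dvartheta \<Theta> s (fst x) (snd x)))
              has_real_derivative (- K * (R t)\<^sup>2)) (at t)"
proof -
  fix t
  interpret P: prob_space f0 by (rule prob)
  have mf0: "measurable f0 borel = measurable borel borel" by (rule measurable_cong_sets[OF sets_f0 refl])
  have cT: "continuous_on UNIV (\<lambda>x. \<Theta> (a x) (b x) (c x))"
    if "continuous_on UNIV a" "continuous_on UNIV b" "continuous_on UNIV c"
    for a b c :: "'z::topological_space \<Rightarrow> real"
  proof -
    have "continuous_on UNIV (\<lambda>x. (a x, b x, c x))" using that by (intro continuous_on_Pair)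
    from continuous_on_compose2[OF cont this] show ?thesis by simp
  qed
  have mcis: "(\<lambda>x. cis (\<Theta> s (fst x) (snd x))) \<in> borel_measurable f0" for s
  proof -
    have "continuous_on UNIV (\<lambda>x::real\<times>real. cis (\<Theta> s (fst x) (snd x)))"
      unfolding cis_conv_exp by (intro continuous_intros cT)
    then show ?thesis unfolding mf0 by (rule borel_measurable_continuous_onI)
  qed
  have icis: "integrable f0 (\<lambda>x. cis (\<Theta> s (fst x) (snd x)))" for s
    by (rule P.integrable_const_bound[where B=1]) (auto simp: mcis)
  have R1: "R s \<le> 1" for s
  proof -
    have "R s = norm (complex_of_real (R s) * cis (\<phi> s))" using R_nonneg[of s] by (simp add: norm_mult)
    also have "\<dots> = norm (LINT x|f0. cis (\<Theta> s (fst x) (snd x)))" by (simp add: order_param)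
    also have "\<dots> \<le> (LINT x|f0. norm (cis (\<Theta> s (fst x) (snd x))))" by (rule integral_norm_bound)
    also have "\<dots> = 1" by (simp add: P.prob_space)
    finally show ?thesis .
  qed
  define D where "D s \<theta> \<omega> = dTheta_dvartheta \<Theta> s \<theta> \<omega>" for s \<theta> \<omega>
  define \<alpha> where "\<alpha> s \<theta> \<omega> = - K * R s * cos (\<Theta> s \<theta> \<omega> - \<phi> s)" for s \<theta> \<omega>
  have \<alpha>b: "\<bar>\<alpha> s \<theta> \<omega>\<bar> \<le> K" for s \<theta> \<omega>
  proof -
    have "\<bar>\<alpha> s \<theta> \<omega>\<bar> = K * (R s * \<bar>cos (\<Theta> s \<theta> \<omega> - \<phi> s)\<bar>)"
      unfolding \<alpha>_def using K_pos R_nonneg[of s] by (simp add: abs_mult)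
    also have "\<dots> \<le> K * (1 * 1)"
      using K_pos R_nonneg[of s] R1[of s] abs_cos_le_one[of "\<Theta> s \<theta> \<omega> - \<phi> s"]
      by (intro mult_left_mono[OF mult_mono]) auto
    finally show ?thesis by simp
  qed
  have Dder: "((\<lambda>s. D s \<theta> \<omega>) has_real_derivative \<alpha> s \<theta> \<omega> * D s \<theta> \<omega>) (at s)" for s \<theta> \<omega>
  proof -
    have "((\<lambda>s. deriv ((\<lambda>s y. \<Theta> s y \<omega>) s) \<theta>) has_real_derivative
       (- K * R s * cos ((\<lambda>s y. \<Theta> s y \<omega>) s \<theta> - \<phi> s) * deriv ((\<lambda>s y. \<Theta> s y \<omega>) s) \<theta>)) (at s)"
    proof (rule var_eq[OF K_pos])
      show "continuous_on UNIV (\<lambda>p. (\<lambda>s y. \<Theta> s y \<omega>) (fst p) (snd p))"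
        by (auto intro!: cT continuous_intros)
      show "\<And>t y. (\<lambda>s y. \<Theta> s y \<omega>) t differentiable at y" using diff_theta by simp
      show "continuous_on UNIV (\<lambda>p. deriv ((\<lambda>s y. \<Theta> s y \<omega>) (fst p)) (snd p))"
        using cont_dtheta[of \<omega>] by (simp add: dTheta_dvartheta_def case_prod_unfold)
      show "\<And>t y. ((\<lambda>s. (\<lambda>s y. \<Theta> s y \<omega>) s y) has_real_derivative
          \<omega> - K * R t * sin ((\<lambda>s y. \<Theta> s y \<omega>) t y - \<phi> t)) (at t)" using ode by simp
    qed (use R_nonneg R1 in auto)
    then show ?thesis by (simp add: D_def \<alpha>_def dTheta_dvartheta_def mult.assoc)
  qed
  have D0: "D 0 \<theta> \<omega> = 1" for \<theta> \<omega>
    by (simp add: D_def dTheta_dvartheta_def init)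
  have Dpos: "D s \<theta> \<omega> > 0" for s \<theta> \<omega>
    by (rule pos_lin_ode[where f="\<lambda>s. D s \<theta> \<omega>" and \<alpha>="\<lambda>s. \<alpha> s \<theta> \<omega>" and K=K])
       (use D0 Dder \<alpha>b in auto)
  have lnder: "((\<lambda>s. ln (D s \<theta> \<omega>)) has_real_derivative \<alpha> s \<theta> \<omega>) (at s)" for s \<theta> \<omega>
  proof -
    have "((\<lambda>s. ln (D s \<theta> \<omega>)) has_real_derivative inverse (D s \<theta> \<omega>) * (\<alpha> s \<theta> \<omega> * D s \<theta> \<omega>)) (at s)"
      by (rule DERIV_chain2[OF DERIV_ln[OF Dpos] Dder])
    moreover have "inverse (D s \<theta> \<omega>) * (\<alpha> s \<theta> \<omega> * D s \<theta> \<omega>) = \<alpha> s \<theta> \<omega>"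
      using Dpos[of s \<theta> \<omega>] by (simp add: field_simps)
    ultimately show ?thesis by simp
  qed
  have lip: "\<bar>ln (D a \<theta> \<omega>) - ln (D b \<theta> \<omega>)\<bar> \<le> K * \<bar>a - b\<bar>" for a b \<theta> \<omega>
    by (rule lip_bound[OF lnder \<alpha>b])
  have mD: "(\<lambda>x. D s (fst x) (snd x)) \<in> borel_measurable f0" for s
  proof -
    have lim: "(\<lambda>n. (\<Theta> s (fst x + 1 / real (Suc n)) (snd x) - \<Theta> s (fst x) (snd x)) / (1 / real (Suc n)))
        \<longlonglongrightarrow> D s (fst x) (snd x)" for x
      using dq_seq[of "\<lambda>y. \<Theta> s y (snd x)" "D s (fst x) (snd x)" "fst x"] diff_theta
        DERIV_deriv_iff_real_differentiable
      by (simp add: D_def dTheta_dvartheta_def)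
    show ?thesis unfolding mf0
    proof (rule borel_measurable_LIMSEQ_real[OF lim])
      fix n
      show "(\<lambda>x. (\<Theta> s (fst x + 1 / real (Suc n)) (snd x) - \<Theta> s (fst x) (snd x)) / (1 / real (Suc n)))
          \<in> borel_measurable borel"
        by (intro borel_measurable_continuous_onI continuous_intros cT) auto
    qed
  qed
  have mlnD: "(\<lambda>x. ln (D s (fst x) (snd x))) \<in> borel_measurable f0" for s
    using borel_measurable_ln[OF mD[of s]] .
  have ilnD: "integrable f0 (\<lambda>x. ln (D s (fst x) (snd x)))" for s
  proof (rule P.integrable_const_bound[where B="K * \<bar>s\<bar>"])
    show "AE x in f0. norm (ln (D s (fst x) (snd x))) \<le> K * \<bar>s\<bar>"
    proof (intro AE_I2)
      fix x :: "real \<times> real"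
      have "\<bar>ln (D s (fst x) (snd x)) - ln (D 0 (fst x) (snd x))\<bar> \<le> K * \<bar>s - 0\<bar>" by (rule lip)
      then show "norm (ln (D s (fst x) (snd x))) \<le> K * \<bar>s\<bar>" by (simp add: D0)
    qed
  qed (rule mlnD)
  have m\<alpha>: "(\<lambda>x. \<alpha> t (fst x) (snd x)) \<in> borel_measurable f0"
    unfolding mf0 \<alpha>_def by (intro borel_measurable_continuous_onI continuous_intros cT)
  have icos: "integrable f0 (\<lambda>x. cos (\<Theta> t (fst x) (snd x)))"
    using integrable_Re[OF icis[of t]] by (simp add: cis.sel)
  have isin: "integrable f0 (\<lambda>x. sin (\<Theta> t (fst x) (snd x)))"
    using integrable_Im[OF icis[of t]] by (simp add: cis.sel)
  have Icos: "(LINT x|f0. cos (\<Theta> t (fst x) (snd x))) = R t * cos (\<phi> t)"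
  proof -
    have "(LINT x|f0. cos (\<Theta> t (fst x) (snd x))) = (LINT x|f0. Re (cis (\<Theta> t (fst x) (snd x))))" by simp
    also have "\<dots> = Re (LINT x|f0. cis (\<Theta> t (fst x) (snd x)))" by (rule integral_Re[OF icis])
    also have "\<dots> = R t * cos (\<phi> t)" by (simp add: order_param[symmetric])
    finally show ?thesis .
  qed
  have Isin: "(LINT x|f0. sin (\<Theta> t (fst x) (snd x))) = R t * sin (\<phi> t)"
  proof -
    have "(LINT x|f0. sin (\<Theta> t (fst x) (snd x))) = (LINT x|f0. Im (cis (\<Theta> t (fst x) (snd x))))" by simp
    also have "\<dots> = Im (LINT x|f0. cis (\<Theta> t (fst x) (snd x)))" by (rule integral_Im[OF icis])
    also have "\<dots> = R t * sin (\<phi> t)" by (simp add: order_param[symmetric])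
    finally show ?thesis .
  qed
  have I\<alpha>: "(LINT x|f0. \<alpha> t (fst x) (snd x)) = - K * (R t)\<^sup>2"
  proof -
    have "(LINT x|f0. \<alpha> t (fst x) (snd x)) = (LINT x|f0. (- K * R t * cos (\<phi> t)) * cos (\<Theta> t (fst x) (snd x))
        + (- K * R t * sin (\<phi> t)) * sin (\<Theta> t (fst x) (snd x)))"
      unfolding \<alpha>_def cos_diff by (rule Bochner_Integration.integral_cong) (auto simp: algebra_simps)
    also have "\<dots> = (- K * R t * cos (\<phi> t)) * (LINT x|f0. cos (\<Theta> t (fst x) (snd x)))
        + (- K * R t * sin (\<phi> t)) * (LINT x|f0. sin (\<Theta> t (fst x) (snd x)))"
      using icos isin by simp
    also have "\<dots> = - K * (R t)\<^sup>2 * ((cos (\<phi> t))\<^sup>2 + (sin (\<phi> t))\<^sup>2)"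
      unfolding Icos Isin power2_eq_square by algebra
    finally show ?thesis by simp
  qed
  have "((\<lambda>s. LINT x|f0. ln (D s (fst x) (snd x))) has_real_derivative (- K * (R t)\<^sup>2)) (at t)"
    unfolding has_field_derivative_iff tendsto_at_iff_sequentially
  proof (intro allI impI)
    fix X :: "nat \<Rightarrow> real" assume X: "\<forall>i. X i \<in> UNIV - {t}" "X \<longlonglongrightarrow> t"
    define s where "s i x = (ln (D (X i) (fst x) (snd x)) - ln (D t (fst x) (snd x))) / (X i - t)" for i x
    have eq: "((\<lambda>y. ((LINT x|f0. ln (D y (fst x) (snd x))) - (LINT x|f0. ln (D t (fst x) (snd x)))) / (y - t)) \<circ> X) i
        = (LINT x|f0. s i x)" for i
      unfolding s_def comp_def using ilnD[of "X i"] ilnD[of t] by simp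
    have "(\<lambda>i. LINT x|f0. s i x) \<longlonglongrightarrow> (LINT x|f0. \<alpha> t (fst x) (snd x))"
    proof (rule integral_dominated_convergence[where w="\<lambda>_. K"])
      show "(\<lambda>x. \<alpha> t (fst x) (snd x)) \<in> borel_measurable f0" by (rule m\<alpha>)
      show "s i \<in> borel_measurable f0" for i
        unfolding s_def using mlnD by measurable
      show "integrable f0 (\<lambda>_. K)" by simp
      show "AE x in f0. (\<lambda>i. s i x) \<longlonglongrightarrow> \<alpha> t (fst x) (snd x)"
      proof (rule AE_I2)
        fix x
        have "((\<lambda>y. (ln (D y (fst x) (snd x)) - ln (D t (fst x) (snd x))) / (y - t)) \<longlongrightarrow> \<alpha> t (fst x) (snd x)) (at t)"
          using lnder by (simp add: has_field_derivative_iff)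
        then have "((\<lambda>y. (ln (D y (fst x) (snd x)) - ln (D t (fst x) (snd x))) / (y - t)) \<circ> X) \<longlonglongrightarrow> \<alpha> t (fst x) (snd x)"
          using X by (simp add: tendsto_at_iff_sequentially)
        then show "(\<lambda>i. s i x) \<longlonglongrightarrow> \<alpha> t (fst x) (snd x)" by (simp add: s_def comp_def)
      qed
      show "AE x in f0. norm (s i x) \<le> K" for i
      proof (rule AE_I2)
        fix x
        have ne: "X i - t \<noteq> 0" using X by auto
        have "\<bar>s i x\<bar> = \<bar>ln (D (X i) (fst x) (snd x)) - ln (D t (fst x) (snd x))\<bar> / \<bar>X i - t\<bar>"
          by (simp add: s_def abs_divide)
        also have "\<dots> \<le> K * \<bar>X i - t\<bar> / \<bar>X i - t\<bar>"
          by (rule divide_right_mono[OF lip]) simp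
        also have "\<dots> = K" using ne by simp
        finally show "norm (s i x) \<le> K" by simp
      qed
    qed
    then show "((\<lambda>y. ((LINT x|f0. ln (D y (fst x) (snd x))) - (LINT x|f0. ln (D t (fst x) (snd x)))) / (y - t)) \<circ> X)
        \<longlonglongrightarrow> - K * (R t)\<^sup>2"
      unfolding eq I\<alpha> .
  qed
  then show "((\<lambda>s. LINT x|f0. ln (dTheta_dvartheta \<Theta> s (fst x) (snd x)))
              has_real_derivative (- K * (R t)\<^sup>2)) (at t)"
    by (simp add: D_def)
qed

end
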